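(* Consider the topological map $\bar G$ of a narrow-passage warehouse with shelves $s\in\{1,\dots,S\}$ arranged in a rectangular array. For each shelf $s$ choose one of its two 0-instance orientations $I_s$ (clockwise or counterclockwise directed cycle), and choose an arbitrary linear order $s_1,s_2,\dots,s_S$ of the shelves. Build a directed graph by processing the shelves in this order: start with the vertices and directed edges of $I_{s_1}$, and when processing $I_{s_k}$ add its vertices and add each of its directed edges whose underlying undirected edge has not already been oriented by an earlier processed cycle (edges already oriented keep their earlier orientation). Then in the resulting directed graph, for any two vertices $v_s,v_t\in\bar V$ there exists a directed path from $v_s$ to $v_t$ (i.e. the graph is strongly connected).
   Context: Warehouse: a grid with horizontal passage rows $\mathcal H=\{i_1<i_2<\dots\}$ and vertical passage columns $\mathcal V=\{j_1<j_2<\dots\}$ (each of width one cell), with rectangular shelf blocks filling the regions between consecutive passage rows and consecutive passage columns; there are $S=(|\mathcal H|-1)(|\mathcal V|-1)$ shelves. Topological map $\bar G=(\bar V,\bar E)$: its vertices are the crossing vertices (cells $(i,j)\in\mathcal H\times\mathcal V$) and one passage vertex for each passage segment between two consecutive crossings along a passage row or column; each passage vertex is adjacent exactly to the two crossing vertices at the ends of its segment, and there are no other edges. Each shelf $s$ is surrounded by four crossing vertices $v_i,v_j,v_m,v_n$ (its corners, in cyclic order) and four passage vertices $v'_i,v'_j,v'_m,v'_n$ (its sides, $v'_i$ between $v_i$ and $v_j$, etc.). The clockwise 0-instance of $s$ is the directed cycle $v_i\to v'_i\to v_j\to v'_j\to v_m\to v'_m\to v_n\to v'_n\to v_i$, and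 the counterclockwise 0-instance is the reverse cycle $v_i\to v'_n\to v_n\to v'_m\to v_m\to v'_j\to v_j\to v'_i\to v_i$. *)

theory Defs
  imports Main
begin

text \<open>Passage rows/columns are indexed by their rank
  0..nh-1 (rows) and 0..nv-1 (columns).
  Cross i j : crossing of the i-th passage row and j-th passage column.
  HSeg i j  : passage vertex on row i between crossings (i,j) and (i,j+1).
  VSeg i j  : passage vertex on column j between crossings (i,j) and (i+1,j).\<close>
datatype tvertex = Cross nat nat | HSeg nat nat | VSeg nat nat

definition tmap_vertices :: "nat \<Rightarrow> nat \<Rightarrow> tvertex set" where
  "tmap_vertices nh nv =
     {Cross i j | i j. i < nh \<and> j < nv} \<union>
     {HSeg i j | i j. i < nh \<and> j + 1 < nv} \<union>
     {VSeg i j | i j. i + 1 < nh \<and> j < nv}"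

text \<open>Shelves: shelf (a,b) lies between rows a,a+1 and columns b,b+1.\<close>
definition shelves :: "nat \<Rightarrow> nat \<Rightarrow> (nat \<times> nat) set" where
  "shelves nh nv = {(a, b). a + 1 < nh \<and> b + 1 < nv}"

text \<open>One orientation (0-instance) of shelf (a,b) as list of directed edges, going
  around corners (a,b) -> (a,b+1) -> (a+1,b+1) -> (a+1,b) -> (a,b) via the side passage
  vertices.\<close>
definition cycle_fwd :: "nat \<times> nat \<Rightarrow> (tvertex \<times> tvertex) list" where
  "cycle_fwd s = (case s of (a, b) \<Rightarrow>
     [(Cross a b, HSeg a b), (HSeg a b, Cross a (b+1)),
      (Cross a (b+1), VSeg a (b+1)), (VSeg a (b+1), Cross (a+1) (b+1)),
      (Cross (a+1) (b+1), HSeg (a+1) b), (HSeg (a+1) b, Cross (a+1) b),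
      (Cross (a+1) b, VSeg a b), (VSeg a b, Cross a b)])"

definition cycle_bwd :: "nat \<times> nat \<Rightarrow> (tvertex \<times> tvertex) list" where
  "cycle_bwd s = map (\<lambda>(u, v). (v, u)) (rev (cycle_fwd s))"

definition zero_instance :: "(nat \<times> nat \<Rightarrow> bool) \<Rightarrow> nat \<times> nat \<Rightarrow> (tvertex \<times> tvertex) list" where
  "zero_instance ori s = (if ori s then cycle_fwd s else cycle_bwd s)"

fun process :: "(nat \<times> nat \<Rightarrow> bool) \<Rightarrow> (tvertex \<times> tvertex) set \<Rightarrow> (nat \<times> nat) list
                 \<Rightarrow> (tvertex \<times> tvertex) set" where
  "process ori D [] = D"
| "process ori D (s # ss) =
     process ori (D \<union> {(u, v). (u, v) \<in> set (zero_instance ori s) \<and> (u, v) \<notin> D \<and> (v, u) \<notin> D}) ss"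

end

theory Submission
  imports Defs
begin

definition bi :: "('a \<times> 'a) set \<Rightarrow> 'a \<Rightarrow> 'a \<Rightarrow> bool" where
  "bi R x y \<longleftrightarrow> (x, y) \<in> R\<^sup>* \<and> (y, x) \<in> R\<^sup>*"

lemma bi_trans: "bi R x y \<Longrightarrow> bi R y z \<Longrightarrow> bi R x z"
  unfolding bi_def by (meson rtrancl_trans)

lemma bi_sym: "bi R x y \<Longrightarrow> bi R y x"
  unfolding bi_def by simp

lemma cyc8:
  assumes "(x1,x2)\<in>r\<^sup>*" "(x2,x3)\<in>r\<^sup>*" "(x3,x4)\<in>r\<^sup>*" "(x4,x5)\<in>r\<^sup>*"
    "(x5,x6)\<in>r\<^sup>*" "(x6,x7)\<in>r\<^sup>*" "(x7,x8)\<in>r\<^sup>*" "(x8,x1)\<in>r\<^sup>*"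
  shows "bi r x1 x2 \<and> bi r x2 x3 \<and> bi r x3 x4 \<and> bi r x4 x5 \<and> bi r x5 x6
     \<and> bi r x6 x7 \<and> bi r x7 x8 \<and> bi r x8 x1"
proof -
  have t: "\<And>a b c. (a,b)\<in>r\<^sup>* \<Longrightarrow> (b,c)\<in>r\<^sup>* \<Longrightarrow> (a,c)\<in>r\<^sup>*" by (rule rtrancl_trans)
  have "(x2,x1)\<in>r\<^sup>*" using assms t by meson
  moreover have "(x3,x2)\<in>r\<^sup>*" using assms t by meson
  moreover have "(x4,x3)\<in>r\<^sup>*" using assms t by meson
  moreover have "(x5,x4)\<in>r\<^sup>*" using assms t by meson
  moreover have "(x6,x5)\<in>r\<^sup>*" using assms t by meson
  moreover have "(x7,x6)\<in>r\<^sup>*" using assms t by meson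
  moreover have "(x8,x7)\<in>r\<^sup>*" using assms t by meson
  moreover have "(x1,x8)\<in>r\<^sup>*" using assms t by meson
  ultimately show ?thesis using assms unfolding bi_def by blast
qed

lemma cycle_all:
  assumes "\<forall>(u,v)\<in>set (zero_instance ori s). (u,v) \<in> R\<^sup>*"
  shows "\<forall>(u,v)\<in>set (zero_instance ori s). bi R u v"
proof -
  obtain a b where s: "s = (a,b)" by fastforce
  show ?thesis
  proof (cases "ori s")
    case True
    then show ?thesis using assms
      by (simp add: zero_instance_def cycle_fwd_def s) (rule cyc8; blast)
  next
    case False
    then have h: "(Cross a b, VSeg a b) \<in> R\<^sup>* \<and> (VSeg a b, Cross (Suc a) b) \<in> R\<^sup>* \<and>
      (Cross (Suc a) b, HSeg (Suc a) b) \<in> R\<^sup>* \<and> (HSeg (Suc a) b, Cross (Suc a) (Suc b)) \<in> R\<^sup>* \<and>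
      (Cross (Suc a) (Suc b), VSeg a (Suc b)) \<in> R\<^sup>* \<and> (VSeg a (Suc b), Cross a (Suc b)) \<in> R\<^sup>* \<and>
      (Cross a (Suc b), HSeg a b) \<in> R\<^sup>* \<and> (HSeg a b, Cross a b) \<in> R\<^sup>*"
      using assms by (simp add: zero_instance_def cycle_bwd_def cycle_fwd_def s)
    have "bi R (Cross a b) (VSeg a b) \<and> bi R (VSeg a b) (Cross (Suc a) b) \<and>
      bi R (Cross (Suc a) b) (HSeg (Suc a) b) \<and> bi R (HSeg (Suc a) b) (Cross (Suc a) (Suc b)) \<and>
      bi R (Cross (Suc a) (Suc b)) (VSeg a (Suc b)) \<and> bi R (VSeg a (Suc b)) (Cross a (Suc b)) \<and>
      bi R (Cross a (Suc b)) (HSeg a b) \<and> bi R (HSeg a b) (Cross a b)"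
      using h by (intro cyc8) blast+
    then show ?thesis using False
      by (auto simp add: zero_instance_def cycle_bwd_def cycle_fwd_def s bi_sym)
  qed
qed

lemma fwd_in_zero:
  assumes "\<forall>(u,v)\<in>set (zero_instance ori s). bi R u v"
  shows "\<forall>(u,v)\<in>set (cycle_fwd s). bi R u v"
proof -
  obtain a b where s: "s = (a,b)" by fastforce
  show ?thesis
  proof (cases "ori s")
    case True
    then show ?thesis using assms by (simp add: zero_instance_def)
  next
    case False
    then show ?thesis using assms
      by (auto simp add: zero_instance_def cycle_bwd_def s bi_sym)
  qed
qed

lemma process_inv:
  assumes "\<forall>(u,v)\<in>D. (v,u) \<in> D\<^sup>*"
  shows "D \<subseteq> process ori D ss \<and> (\<forall>(u,v)\<in>process ori D ss. (v,u) \<in> (process ori D ss)\<^sup>*)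
    \<and> (\<forall>s\<in>set ss. \<forall>(u,v)\<in>set (zero_instance ori s). bi (process ori D ss) u v)"
  using assms
proof (induction ss arbitrary: D)
  case Nil
  then show ?case by simp
next
  case (Cons s ss)
  define D1 where "D1 = D \<union> {(u, v). (u, v) \<in> set (zero_instance ori s) \<and> (u, v) \<notin> D \<and> (v, u) \<notin> D}"
  have sub: "D\<^sup>* \<subseteq> D1\<^sup>*" by (rule rtrancl_mono) (auto simp: D1_def)
  have e: "\<forall>(u,v)\<in>set (zero_instance ori s). (u,v) \<in> D1\<^sup>*"
  proof (intro ballI, clarify)
    fix u v assume m: "(u,v) \<in> set (zero_instance ori s)"
    show "(u,v) \<in> D1\<^sup>*"
    proof (cases "(u,v) \<in> D \<or> (v,u) \<in> D")
      case True
      then show ?thesis using Cons.prems sub by (auto simp: D1_def)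
    next
      case False
      then show ?thesis using m by (auto simp: D1_def)
    qed
  qed
  have c: "\<forall>(u,v)\<in>set (zero_instance ori s). bi D1 u v" using cycle_all[OF e] .
  have inv1: "\<forall>(u,v)\<in>D1. (v,u) \<in> D1\<^sup>*"
  proof (intro ballI, clarify)
    fix u v assume m: "(u,v) \<in> D1"
    show "(v,u) \<in> D1\<^sup>*"
    proof (cases "(u,v) \<in> D")
      case True
      then show ?thesis using Cons.prems sub by auto
    next
      case False
      then have "(u,v) \<in> set (zero_instance ori s)" using m by (auto simp: D1_def)
      then show ?thesis using c by (auto simp: bi_def)
    qed
  qed
  have IH: "D1 \<subseteq> process ori D1 ss \<and> (\<forall>(u,v)\<in>process ori D1 ss. (v,u) \<in> (process ori D1 ss)\<^sup>*)
    \<and> (\<forall>s\<in>set ss. \<forall>(u,v)\<in>set (zero_instance ori s). bi (process ori D1 ss) u v)"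
    using Cons.IH[OF inv1] .
  have pe: "process ori D (s # ss) = process ori D1 ss" by (simp add: D1_def)
  have sub2: "D1\<^sup>* \<subseteq> (process ori D1 ss)\<^sup>*" using IH by (intro rtrancl_mono) blast
  have "\<forall>(u,v)\<in>set (zero_instance ori s). bi (process ori D1 ss) u v"
    using c sub2 by (auto simp: bi_def)
  then show ?case using IH pe by (auto simp: D1_def)
qed

lemma conn:
  assumes nh: "2 \<le> nh" and nv: "2 \<le> nv"
    and H: "\<And>a b. a + 1 < nh \<Longrightarrow> b + 1 < nv \<Longrightarrow> \<forall>(u,v)\<in>set (cycle_fwd (a,b)). bi R u v"
  shows "\<forall>x \<in> tmap_vertices nh nv. bi R (Cross 0 0) x"
proof -
  have hs: "bi R (Cross i j) (HSeg i j) \<and> bi R (HSeg i j) (Cross i (Suc j))"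
    if "i < nh" "j + 1 < nv" for i j
  proof (cases "i + 1 < nh")
    case True
    then show ?thesis using H[OF True that(2)] by (simp add: cycle_fwd_def)
  next
    case False
    then have i: "i = (i - 1) + 1" "(i-1) + 1 < nh" using that nh by auto
    have "\<forall>(u,v)\<in>set (cycle_fwd (i-1,j)). bi R u v" using H[OF i(2) that(2)] .
    then have "bi R (Cross ((i-1)+1) (j+1)) (HSeg ((i-1)+1) j) \<and> bi R (HSeg ((i-1)+1) j) (Cross ((i-1)+1) j)"
      by (simp add: cycle_fwd_def)
    then show ?thesis using i(1) bi_sym by (metis Suc_eq_plus1)
  qed
  have vs: "bi R (Cross i j) (VSeg i j) \<and> bi R (VSeg i j) (Cross (Suc i) j)"
    if "i + 1 < nh" "j < nv" for i j
  proof (cases "j + 1 < nv")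
    case True
    then show ?thesis using H[OF that(1) True] by (simp add: cycle_fwd_def bi_sym)
  next
    case False
    then have j: "j = (j - 1) + 1" "(j-1) + 1 < nv" using that nv by auto
    have "\<forall>(u,v)\<in>set (cycle_fwd (i,j-1)). bi R u v" using H[OF that(1) j(2)] .
    then have "bi R (Cross i ((j-1)+1)) (VSeg i ((j-1)+1)) \<and> bi R (VSeg i ((j-1)+1)) (Cross (i+1) ((j-1)+1))"
      by (simp add: cycle_fwd_def)
    then show ?thesis using j(1) by (metis Suc_eq_plus1)
  qed
  have brefl: "bi R x x" for x by (simp add: bi_def)
  have row0: "j < nv \<Longrightarrow> bi R (Cross 0 0) (Cross 0 j)" for j
  proof (induction j)
    case 0 then show ?case by (simp add: bi_def)
  next
    case (Suc j)
    then show ?case using hs[of 0 j] nh bi_trans by fastforce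
  qed
  have cr: "i < nh \<Longrightarrow> j < nv \<Longrightarrow> bi R (Cross 0 0) (Cross i j)" for i j
  proof (induction i)
    case 0 then show ?case using row0 by simp
  next
    case (Suc i)
    then show ?case using vs[of i j] bi_trans by fastforce
  qed
  show ?thesis
  proof
    fix x assume "x \<in> tmap_vertices nh nv"
    then show "bi R (Cross 0 0) x"
      unfolding tmap_vertices_def
    proof (elim UnE CollectE exE conjE)
      fix i j assume "x = Cross i j" "i < nh" "j < nv"
      then show ?thesis using cr by simp
    next
      fix i j assume "x = HSeg i j" "i < nh" "j + 1 < nv"
      then show ?thesis using cr[of i j] hs[of i j] bi_trans by fastforce
    next
      fix i j assume "x = VSeg i j" "i + 1 < nh" "j < nv"
      then show ?thesis using cr[of i j] vs[of i j] bi_trans by fastforce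
    qed
  qed
qed

theorem theorem1:
  fixes nh nv :: nat and ori :: "nat \<times> nat \<Rightarrow> bool" and ord :: "(nat \<times> nat) list"
  assumes "2 \<le> nh" and "2 \<le> nv"
    and "distinct ord" and "set ord = shelves nh nv"
  shows "\<forall>x \<in> tmap_vertices nh nv. \<forall>y \<in> tmap_vertices nh nv.
           (x, y) \<in> (process ori {} ord)\<^sup>*"
proof -
  let ?E = "process ori {} ord"
  have P: "\<forall>s\<in>set ord. \<forall>(u,v)\<in>set (zero_instance ori s). bi ?E u v"
    using process_inv[of "{}" ori ord] by simp
  have H: "\<forall>(u,v)\<in>set (cycle_fwd (a,b)). bi ?E u v" if "a + 1 < nh" "b + 1 < nv" for a b
  proof -
    have "(a,b) \<in> set ord" using that assms(4) by (simp add: shelves_def)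
    then show ?thesis using P fwd_in_zero by blast
  qed
  have "\<forall>x \<in> tmap_vertices nh nv. bi ?E (Cross 0 0) x"
    using conn[OF assms(1,2)] H by blast
  then show ?thesis unfolding bi_def by (meson rtrancl_trans)
qed

end
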